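(* Let $G$ be a group, $n\ge2$, $X=\{x_1,\dots,x_n\}$, fix a function $X\to G$, and let $(\mathcal X_l)_{l\ge1}$ be a non-backtracking random walk on $(G,X)$. If the Markov chain $(\mathcal X_l)$ on $\Omega$ is irreducible, then its period is either $1$ or $2$.
   Context: Let $G$ be a group, $X=\{x_1,\dots,x_n\}$ a set with $n\ge 2$, and fix a function $X\to G$; we identify each $x_i$ with its image in $G$. Let $\Omega=G\times\{\pm1,\pm2,\dots,\pm n\}$, with elements written $(g,\epsilon i)$, $g\in G$, $\epsilon=\pm1$, $i\in\{1,\dots,n\}$. A non-backtracking random walk on $(G,X)$ is a Markov chain $(\mathcal X_l)_{l\ge1}$ on $\Omega$ with transition probabilities $\mathbb P(\mathcal X_{l+1}=(g,\epsilon i)\mid \mathcal X_l=(h,\epsilon' j))=\alpha_{\epsilon' j,\epsilon i}$ if $g=hx_i^{\epsilon}$ and $\epsilon i\neq -\epsilon' j$, and $=0$ otherwise, where the $\alpha_{\epsilon' j,\epsilon i}$ are positive constants with $\sum_{\epsilon i\neq-\epsilon' j}\alpha_{\epsilon' j,\epsilon i}=1$ for each $\epsilon' j$; and with initial distribution $\mathbb P(\mathcal X_1=(g,\epsilon i))=\beta_{\epsilon i}$ if $g=x_i^{\epsilon}$ and $0$ otherwise, for positive constants $\beta_{\epsilon i}$ summing to $1$. Irreducibility and period refer to the Markov chain on the full state space $\Omega$. *)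

theory Defs
  imports "HOL-Algebra.Group" "HOL-Analysis.Infinite_Sum"
begin

text \<open>Signed indices \<epsilon> i (\<epsilon> = +-1, i in 1..n) are encoded as nonzero integers s with |s| <= n.\<close>
definition signed_idx :: "nat \<Rightarrow> int set" where
  "signed_idx n = {s. s \<noteq> 0 \<and> \<bar>s\<bar> \<le> int n}"

definition nbstates :: "('g, 'b) monoid_scheme \<Rightarrow> nat \<Rightarrow> ('g \<times> int) set" where
  "nbstates G n = carrier G \<times> signed_idx n"

definition gen_pow :: "('g, 'b) monoid_scheme \<Rightarrow> (nat \<Rightarrow> 'g) \<Rightarrow> int \<Rightarrow> 'g" where
  "gen_pow G x s = (if s > 0 then x (nat s) else inv\<^bsub>G\<^esub> (x (nat (- s))))"

definition nb_trans ::
  "('g, 'b) monoid_scheme \<Rightarrow> (nat \<Rightarrow> 'g) \<Rightarrow> (int \<Rightarrow> int \<Rightarrow> real) \<Rightarrow> ('g \<times> int) \<Rightarrow> ('g \<times> int) \<Rightarrow> real" where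
  "nb_trans G x \<alpha> a b =
     (if fst b = fst a \<otimes>\<^bsub>G\<^esub> gen_pow G x (snd b) \<and> snd b \<noteq> - snd a
      then \<alpha> (snd a) (snd b) else 0)"

fun mstep :: "'s set \<Rightarrow> ('s \<Rightarrow> 's \<Rightarrow> real) \<Rightarrow> nat \<Rightarrow> 's \<Rightarrow> 's \<Rightarrow> real" where
  "mstep S P 0 a b = (if a = b then 1 else 0)"
| "mstep S P (Suc m) a b = (\<Sum>\<^sub>\<infinity>c\<in>S. mstep S P m a c * P c b)"

definition irreducible_chain :: "'s set \<Rightarrow> ('s \<Rightarrow> 's \<Rightarrow> real) \<Rightarrow> bool" where
  "irreducible_chain S P \<longleftrightarrow> (\<forall>a\<in>S. \<forall>b\<in>S. \<exists>m. mstep S P m a b > 0)"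

definition period_of :: "'s set \<Rightarrow> ('s \<Rightarrow> 's \<Rightarrow> real) \<Rightarrow> 's \<Rightarrow> nat" where
  "period_of S P a = Gcd {m. m \<ge> 1 \<and> mstep S P m a a > 0}"

end

theory Submission
  imports Defs
begin

locale nbw =
  fixes G :: "('g, 'b) monoid_scheme" (structure)
    and n :: nat and x :: "nat \<Rightarrow> 'g" and \<alpha> :: "int \<Rightarrow> int \<Rightarrow> real"
  assumes grp: "group G"
    and xG: "\<And>i. i \<in> {1..n} \<Longrightarrow> x i \<in> carrier G"
    and alpha_pos: "\<And>t s. t \<in> signed_idx n \<Longrightarrow> s \<in> signed_idx n \<Longrightarrow> s \<noteq> - t \<Longrightarrow> \<alpha> t s > 0"
begin

abbreviation "S \<equiv> nbstates G n"
abbreviation "P \<equiv> nb_trans G x \<alpha>"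

definition E where "E a b \<longleftrightarrow> fst b = fst a \<otimes> gen_pow G x (snd b) \<and> snd b \<noteq> - snd a"

lemma gp_carrier: "s \<in> signed_idx n \<Longrightarrow> gen_pow G x s \<in> carrier G"
proof -
  assume s: "s \<in> signed_idx n"
  show ?thesis
  proof (cases "s > 0")
    case True
    then have "nat s \<in> {1..n}" using s by (auto simp: signed_idx_def)
    then show ?thesis using True xG by (simp add: gen_pow_def)
  next
    case False
    then have "nat (-s) \<in> {1..n}" using s by (auto simp: signed_idx_def)
    then show ?thesis using False xG group.inv_closed[OF grp] by (simp add: gen_pow_def)
  qed
qed

lemma neg_signed: "s \<in> signed_idx n \<Longrightarrow> - s \<in> signed_idx n"
  by (auto simp: signed_idx_def)

lemma gp_neg: "s \<in> signed_idx n \<Longrightarrow> gen_pow G x (-s) = inv (gen_pow G x s)"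
proof -
  assume s: "s \<in> signed_idx n"
  show ?thesis
  proof (cases "s > 0")
    case True
    then show ?thesis by (simp add: gen_pow_def)
  next
    case False
    then have s0: "s < 0" using s by (auto simp: signed_idx_def)
    then have "nat (-s) \<in> {1..n}" using s by (auto simp: signed_idx_def)
    then show ?thesis using s0 xG group.inv_inv[OF grp] by (simp add: gen_pow_def)
  qed
qed

lemma finite_signed: "finite (signed_idx n)"
  by (rule finite_subset[of _ "{- int n..int n}"]) (auto simp: signed_idx_def)

lemma P_zero: "\<not> E c b \<Longrightarrow> P c b = 0"
  unfolding nb_trans_def E_def by auto

lemma P_pos: "a \<in> S \<Longrightarrow> b \<in> S \<Longrightarrow> E a b \<Longrightarrow> P a b > 0"
  by (auto simp: nb_trans_def E_def nbstates_def intro!: alpha_pos)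

lemma P_nonneg: "a \<in> S \<Longrightarrow> b \<in> S \<Longrightarrow> P a b \<ge> 0"
  using P_pos P_zero by (metis order.refl less_imp_le)

lemma mstep_nonneg: "a \<in> S \<Longrightarrow> b \<in> S \<Longrightarrow> mstep S P m a b \<ge> 0"
proof (induction m arbitrary: b)
  case 0 then show ?case by simp
next
  case (Suc m)
  show ?case
    by (simp, rule infsum_nonneg) (use Suc P_nonneg in auto)
qed

lemma T_finite: "b \<in> S \<Longrightarrow> finite {c \<in> S. E c b}"
proof -
  assume b: "b \<in> S"
  let ?g = "gen_pow G x (snd b)"
  have gc: "?g \<in> carrier G" using b gp_carrier by (auto simp: nbstates_def)
  have "{c \<in> S. E c b} \<subseteq> {fst b \<otimes> inv ?g} \<times> signed_idx n"
  proof
    fix c assume c: "c \<in> {c \<in> S. E c b}"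
    then have fc: "fst c \<in> carrier G" "snd c \<in> signed_idx n" by (auto simp: nbstates_def)
    have "fst b \<otimes> inv ?g = fst c \<otimes> ?g \<otimes> inv ?g" using c by (auto simp: E_def)
    also have "\<dots> = fst c" using fc gc grp
      by (simp add: group.inv_closed monoid.m_assoc group.is_monoid group.r_inv)
    finally show "c \<in> {fst b \<otimes> inv ?g} \<times> signed_idx n" using fc by (cases c) auto
  qed
  then show ?thesis by (rule finite_subset) (simp add: finite_signed)
qed

lemma mstep_Suc_pos:
  assumes a: "a \<in> S" and b: "b \<in> S"
  shows "mstep S P (Suc m) a b > 0 \<longleftrightarrow> (\<exists>c\<in>S. mstep S P m a c > 0 \<and> E c b)"
proof -
  let ?T = "{c \<in> S. E c b}"
  have eq: "mstep S P (Suc m) a b = (\<Sum>c\<in>?T. mstep S P m a c * P c b)"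
  proof -
    have "mstep S P (Suc m) a b = infsum (\<lambda>c. mstep S P m a c * P c b) ?T"
      by (simp, rule infsum_cong_neutral) (auto simp: P_zero)
    then show ?thesis using T_finite[OF b] by simp
  qed
  have nn: "\<And>c. c \<in> ?T \<Longrightarrow> 0 \<le> mstep S P m a c * P c b"
    using mstep_nonneg[OF a] P_nonneg b by auto
  show ?thesis
  proof
    assume "mstep S P (Suc m) a b > 0"
    then have "\<not> (\<forall>c\<in>?T. mstep S P m a c * P c b \<le> 0)"
    proof (intro notI)
      assume h: "\<forall>c\<in>?T. mstep S P m a c * P c b \<le> 0"
      have "(\<Sum>c\<in>?T. mstep S P m a c * P c b) \<le> 0" by (rule sum_nonpos) (use h in auto)
      then show False using eq \<open>mstep S P (Suc m) a b > 0\<close> by linarith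
    qed
    then obtain c where c: "c \<in> ?T" "mstep S P m a c * P c b > 0" by force
    then have "mstep S P m a c > 0"
      using c P_nonneg[of c b] b by (auto simp: zero_less_mult_iff)
    then show "\<exists>c\<in>S. mstep S P m a c > 0 \<and> E c b" using c by auto
  next
    assume "\<exists>c\<in>S. mstep S P m a c > 0 \<and> E c b"
    then obtain c where c: "c \<in> S" "mstep S P m a c > 0" "E c b" by auto
    have "0 < (\<Sum>c\<in>?T. mstep S P m a c * P c b)"
      by (rule sum_pos2[OF T_finite[OF b], of c]) (use c P_pos b nn in auto)
    then show "mstep S P (Suc m) a b > 0" using eq by simp
  qed
qed

inductive walk :: "nat \<Rightarrow> ('g \<times> int) \<Rightarrow> ('g \<times> int) \<Rightarrow> bool" where
  w0: "a \<in> S \<Longrightarrow> walk 0 a a"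
| wS: "walk m a c \<Longrightarrow> E c b \<Longrightarrow> b \<in> S \<Longrightarrow> walk (Suc m) a b"

lemma walk_S: "walk m a b \<Longrightarrow> a \<in> S \<and> b \<in> S"
  by (induction rule: walk.induct) auto

lemma walk_SucE: "walk (Suc m) a b \<Longrightarrow> \<exists>c. walk m a c \<and> E c b \<and> b \<in> S"
  by (cases rule: walk.cases) auto

lemma walk_iff: "a \<in> S \<Longrightarrow> b \<in> S \<Longrightarrow> walk m a b \<longleftrightarrow> mstep S P m a b > 0"
proof (induction m arbitrary: b)
  case 0
  then show ?case by (auto elim: walk.cases intro: w0)
next
  case (Suc m)
  have "walk (Suc m) a b \<longleftrightarrow> (\<exists>c\<in>S. walk m a c \<and> E c b)"
  proof
    assume "walk (Suc m) a b"
    then obtain c where "walk m a c" "E c b" using walk_SucE by blast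
    then show "\<exists>c\<in>S. walk m a c \<and> E c b" using walk_S by blast
  next
    assume "\<exists>c\<in>S. walk m a c \<and> E c b"
    then show "walk (Suc m) a b" using Suc.prems wS by blast
  qed
  also have "\<dots> \<longleftrightarrow> (\<exists>c\<in>S. mstep S P m a c > 0 \<and> E c b)" using Suc by auto
  also have "\<dots> \<longleftrightarrow> mstep S P (Suc m) a b > 0" using mstep_Suc_pos Suc.prems by auto
  finally show ?case .
qed

lemma walk_trans: "walk k b c \<Longrightarrow> walk m a b \<Longrightarrow> walk (m + k) a c"
  by (induction rule: walk.induct) (auto intro: wS)

lemma walk_edge: "a \<in> S \<Longrightarrow> b \<in> S \<Longrightarrow> E a b \<Longrightarrow> walk 1 a b"
  using wS[OF w0] by fastforce

definition R where "R a = (fst a \<otimes> gen_pow G x (- snd a), - snd a)"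

lemma R_S: "a \<in> S \<Longrightarrow> R a \<in> S"
  using gp_carrier neg_signed group.is_monoid[OF grp]
  by (auto simp: R_def nbstates_def intro!: monoid.m_closed)

lemma E_R: assumes a: "a \<in> S" and b: "b \<in> S" and e: "E a b" shows "E (R b) (R a)"
proof -
  have ga: "fst a \<in> carrier G" and sa: "snd a \<in> signed_idx n"
    and sb: "snd b \<in> signed_idx n" using a b by (auto simp: nbstates_def)
  have gc: "gen_pow G x (snd b) \<in> carrier G" using gp_carrier sb by auto
  have "fst (R b) = fst a \<otimes> gen_pow G x (snd b) \<otimes> inv (gen_pow G x (snd b))"
    using e gp_neg[OF sb] by (simp add: R_def E_def)
  also have "\<dots> = fst a" using ga gc grp
    by (simp add: group.inv_closed monoid.m_assoc group.is_monoid group.r_inv)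
  finally show ?thesis using e by (auto simp: E_def R_def)
qed

lemma walk_R: "walk m a b \<Longrightarrow> walk m (R b) (R a)"
proof (induction rule: walk.induct)
  case (w0 a) then show ?case by (simp add: R_S walk.w0)
next
  case (wS m a c b)
  have "c \<in> S" using wS walk_S by blast
  have "walk 1 (R b) (R c)"
    by (rule walk_edge[OF R_S[OF wS.hyps(3)] R_S[OF \<open>c \<in> S\<close>] E_R[OF \<open>c \<in> S\<close> wS.hyps(3) wS.hyps(2)]])
  from walk_trans[OF wS.IH this] show ?case by simp
qed

end

lemma Gcd_12: fixes d :: nat assumes "d dvd 2" "d \<noteq> 0" shows "d \<in> {1, 2}"
proof -
  have "d \<le> 2" using assms dvd_imp_le by auto
  then have "d = 1 \<or> d = 2" using assms(2) by linarith
  then show ?thesis by auto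
qed

theorem mainTheorem2:
  fixes G (structure) and n :: nat and x :: "nat \<Rightarrow> 'g"
    and \<alpha> :: "int \<Rightarrow> int \<Rightarrow> real" and \<beta> :: "int \<Rightarrow> real"
  assumes grp: "group G"
    and n2: "n \<ge> 2"
    and xG: "\<And>i. i \<in> {1..n} \<Longrightarrow> x i \<in> carrier G"
    and alpha_pos: "\<And>t s. t \<in> signed_idx n \<Longrightarrow> s \<in> signed_idx n \<Longrightarrow> s \<noteq> - t \<Longrightarrow> \<alpha> t s > 0"
    and alpha_sum: "\<And>t. t \<in> signed_idx n \<Longrightarrow> (\<Sum>s\<in>{s \<in> signed_idx n. s \<noteq> - t}. \<alpha> t s) = 1"
    and beta_pos: "\<And>s. s \<in> signed_idx n \<Longrightarrow> \<beta> s > 0"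
    and beta_sum: "(\<Sum>s\<in>signed_idx n. \<beta> s) = 1"
    and irr: "irreducible_chain (nbstates G n) (nb_trans G x \<alpha>)"
  shows "\<forall>a\<in>nbstates G n. period_of (nbstates G n) (nb_trans G x \<alpha>) a \<in> {1, 2}"
proof
  interpret nbw G n x \<alpha> by (rule nbw.intro) (use grp xG alpha_pos in auto)
  have conn: "\<And>a b. a \<in> S \<Longrightarrow> b \<in> S \<Longrightarrow> \<exists>m. walk m a b"
    using irr walk_iff unfolding irreducible_chain_def by blast
  fix a0 assume a0: "a0 \<in> S"
  define A where "A = {m. m \<ge> 1 \<and> mstep S P m a0 a0 > 0}"
  define d where "d = Gcd A"
  have pd: "period_of S P a0 = d" by (simp add: period_of_def d_def A_def)
  have dvdA: "\<And>m. walk m a0 a0 \<Longrightarrow> d dvd m"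
  proof -
    fix m assume w: "walk m a0 a0"
    show "d dvd m"
    proof (cases "m = 0")
      case False
      then have "m \<in> A" using w walk_iff a0 by (auto simp: A_def)
      then show ?thesis unfolding d_def by (rule Gcd_dvd)
    qed simp
  qed
  define k where "k b = (SOME k. walk k b a0)" for b
  define \<phi> where "\<phi> b = - int (k b)" for b
  have wk: "\<And>b. b \<in> S \<Longrightarrow> walk (k b) b a0"
    unfolding k_def using conn a0 by (metis someI_ex)
  define D where "D = int d"
  have phase: "\<And>m b c. walk m b c \<Longrightarrow> D dvd (\<phi> c - \<phi> b - int m)"
  proof -
    fix m b c assume w: "walk m b c"
    then have bc: "b \<in> S" "c \<in> S" using walk_S by auto
    obtain j where j: "walk j a0 b" using conn a0 bc by blast
    have "walk (j + m) a0 c" using walk_trans[OF w j] .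
    from walk_trans[OF wk[OF bc(2)] this] have "d dvd (j + m + k c)" by (rule dvdA)
    then have 1: "D dvd int j + int m + int (k c)" unfolding D_def
      by (metis int_dvd_int_iff of_nat_add)
    from walk_trans[OF wk[OF bc(1)] j] have "d dvd (j + k b)" by (rule dvdA)
    then have 2: "D dvd int j + int (k b)" unfolding D_def
      by (metis int_dvd_int_iff of_nat_add)
    have "\<phi> c - \<phi> b - int m = (int j + int (k b)) - (int j + int m + int (k c))"
      by (simp add: \<phi>_def)
    then show "D dvd (\<phi> c - \<phi> b - int m)" by (metis 1 2 dvd_diff)
  qed
  define c0 where "c0 = \<phi> a0 + \<phi> (R a0)"
  have psi: "\<And>a. a \<in> S \<Longrightarrow> D dvd (\<phi> a + \<phi> (R a) - c0)"
  proof -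
    fix a assume a: "a \<in> S"
    obtain m where w: "walk m a0 a" using conn a0 a by blast
    have 1: "D dvd (\<phi> a - \<phi> a0 - int m)" using phase[OF w] .
    have 2: "D dvd (\<phi> (R a0) - \<phi> (R a) - int m)" using phase[OF walk_R[OF w]] .
    have "\<phi> a + \<phi> (R a) - c0 = (\<phi> a - \<phi> a0 - int m) - (\<phi> (R a0) - \<phi> (R a) - int m)"
      by (simp add: c0_def)
    then show "D dvd (\<phi> a + \<phi> (R a) - c0)" by (metis 1 2 dvd_diff)
  qed
  have gmon: "monoid G" using grp group.is_monoid by blast
  have Q: "\<And>g s s'. g \<in> carrier G \<Longrightarrow> s \<in> signed_idx n \<Longrightarrow> s' \<in> signed_idx n \<Longrightarrow> s' \<noteq> s
      \<Longrightarrow> D dvd (\<phi> (g, s') + \<phi> (g, s) + 1 - c0)"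
  proof -
    fix g s s' assume g: "g \<in> carrier G" and s: "s \<in> signed_idx n" and s': "s' \<in> signed_idx n"
      and ne: "s' \<noteq> s"
    define u where "u = - s'"
    have u: "u \<in> signed_idx n" using s' neg_signed u_def by auto
    define b where "b = (g \<otimes> gen_pow G x u, u)"
    have aS: "(g, s) \<in> S" using g s by (simp add: nbstates_def)
    have bS: "b \<in> S" using g u gp_carrier gmon by (simp add: b_def nbstates_def monoid.m_closed)
    have "E (g, s) b" using ne by (auto simp: E_def b_def u_def)
    then have "walk 1 (g, s) b" by (rule walk_edge[OF aS bS])
    then have 1: "D dvd (\<phi> b - \<phi> (g, s) - 1)" using phase by fastforce
    have "R b = (g \<otimes> gen_pow G x u \<otimes> inv (gen_pow G x u), s')"
      using gp_neg[OF u] by (simp add: R_def b_def u_def)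
    also have "\<dots> = (g, s')" using g gp_carrier[OF u] grp
      by (simp add: group.inv_closed monoid.m_assoc group.is_monoid group.r_inv)
    finally have 2: "D dvd (\<phi> b + \<phi> (g, s') - c0)" using psi[OF bS] by simp
    have "\<phi> (g, s') + \<phi> (g, s) + 1 - c0 = (\<phi> b + \<phi> (g, s') - c0) - (\<phi> b - \<phi> (g, s) - 1)"
      by simp
    then show "D dvd (\<phi> (g, s') + \<phi> (g, s) + 1 - c0)" by (metis 1 2 dvd_diff)
  qed
  have sig: "1 \<in> signed_idx n" "-1 \<in> signed_idx n" "2 \<in> signed_idx n" "-2 \<in> signed_idx n"
    using n2 by (auto simp: signed_idx_def)
  have Const: "\<And>g s s'. g \<in> carrier G \<Longrightarrow> s \<in> signed_idx n \<Longrightarrow> s' \<in> signed_idx n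
      \<Longrightarrow> D dvd (\<phi> (g, s') - \<phi> (g, s))"
  proof -
    fix g s s' assume g: "g \<in> carrier G" and s: "s \<in> signed_idx n" and s': "s' \<in> signed_idx n"
    obtain s3 where s3: "s3 \<in> signed_idx n" "s3 \<noteq> s" "s3 \<noteq> s'"
    proof -
      have "(s \<noteq> 1 \<and> s' \<noteq> 1) \<or> (s \<noteq> -1 \<and> s' \<noteq> -1) \<or> (s \<noteq> 2 \<and> s' \<noteq> 2)"
        by auto
      then show ?thesis using that sig by blast
    qed
    have 1: "D dvd (\<phi> (g, s') + \<phi> (g, s3) + 1 - c0)" using Q[OF g s3(1) s'] s3 by auto
    have 2: "D dvd (\<phi> (g, s) + \<phi> (g, s3) + 1 - c0)" using Q[OF g s3(1) s] s3 by auto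
    have "\<phi> (g, s') - \<phi> (g, s) = (\<phi> (g, s') + \<phi> (g, s3) + 1 - c0) - (\<phi> (g, s) + \<phi> (g, s3) + 1 - c0)"
      by simp
    then show "D dvd (\<phi> (g, s') - \<phi> (g, s))" by (metis 1 2 dvd_diff)
  qed
  obtain g s where a0e: "a0 = (g, s)" by (cases a0)
  have g: "g \<in> carrier G" and s: "s \<in> signed_idx n" using a0 a0e by (auto simp: nbstates_def)
  have s0: "s \<noteq> 0" using s by (simp add: signed_idx_def)
  define g1 where "g1 = g \<otimes> gen_pow G x s"
  have g1: "g1 \<in> carrier G" using g s gp_carrier gmon by (simp add: g1_def monoid.m_closed)
  have b1S: "(g1, s) \<in> S" "(g1, -s) \<in> S" "(g, -s) \<in> S"
    using g1 s g neg_signed by (auto simp: nbstates_def)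
  have "E a0 (g1, s)" using s0 by (simp add: E_def a0e g1_def)
  then have w1: "walk 1 a0 (g1, s)" using walk_edge a0 b1S by blast
  have "g1 \<otimes> gen_pow G x (-s) = g"
    using gp_neg[OF s] g gp_carrier[OF s] grp
    by (simp add: g1_def group.inv_closed monoid.m_assoc group.is_monoid group.r_inv)
  then have "E (g1, -s) (g, -s)" using s0 by (simp add: E_def)
  then have w2: "walk 1 (g1, -s) (g, -s)" using walk_edge b1S by blast
  have 1: "D dvd (\<phi> (g1, s) - \<phi> a0 - 1)" using phase[OF w1] by simp
  have 2: "D dvd (\<phi> (g, -s) - \<phi> (g1, -s) - 1)" using phase[OF w2] by simp
  have 3: "D dvd (\<phi> (g1, -s) - \<phi> (g1, s))" using Const[OF g1 s neg_signed[OF s]] .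
  have 4: "D dvd (\<phi> (g, s) - \<phi> (g, -s))" using Const[OF g neg_signed[OF s] s] .
  have "-2 = (\<phi> (g1, s) - \<phi> a0 - 1) + (\<phi> (g, -s) - \<phi> (g1, -s) - 1)
      + (\<phi> (g1, -s) - \<phi> (g1, s)) + (\<phi> (g, s) - \<phi> (g, -s))" by (simp add: a0e)
  then have "D dvd -2" using 1 2 3 4 by (metis dvd_add)
  then have d2: "d dvd 2" unfolding D_def
    by (metis dvd_minus_iff int_dvd_int_iff of_nat_numeral)
  obtain j where j: "walk j (g1, s) a0" using conn a0 b1S by blast
  have "walk (1 + j) a0 a0" using walk_trans[OF j w1] .
  then have "1 + j \<in> A" using walk_iff a0 by (simp add: A_def)
  then have "d \<noteq> 0" unfolding d_def by auto
  then show "period_of S P a0 \<in> {1, 2}" using pd d2 Gcd_12 by simp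
qed

end
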